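(* The Lie algebra $\Lambda(\mathbb{Q}\mathrm{Tree}_2^-)$ is not finitely generated.
   Context: A nonsymmetric operad of sets $\mathcal{C}$ consists of sets $\mathcal{C}((m))$, $m\ge 0$, a unit $1\in\mathcal{C}((1))$, and partial compositions $c\circ_s d\in\mathcal{C}((k+j-1))$ for $c\in\mathcal{C}((k))$, $1\le s\le k$, $d\in\mathcal{C}((j))$, satisfying the usual associativity and unit axioms. Write $\mathbb{Q}\mathcal{C}((m))$ for the free $\mathbb{Q}$-vector space on $\mathcal{C}((m))$. The Lie algebra $\Lambda(\mathbb{Q}\mathcal{C})=\bigoplus_{m\ge0}\mathbb{Q}\mathcal{C}((m))$ has bracket, for $c\in\mathcal{C}((k))$, $d\in\mathcal{C}((j))$, $[c,d]=\sum_{t=1}^{j} d\circ_t c-\sum_{s=1}^{k} c\circ_s d$, extended bilinearly. $\mathrm{Tree}_2((m))$, $m\ge1$, is the set of planar binary rooted trees with one root at the bottom and $m$ leaves at the top labeled $1,\dots,m$ from left to right (each internal vertex has exactly two inputs); equivalently, full parenthesizations of the word $12\cdots m$, e.g. $\mathrm{Tree}_2((1))=\{1\}$ (trivial tree), $\mathrm{Tree}_2((2))=\{(12)\}$, $\mathrm{Tree}_2((3))=\{((12)3),(1(23))\}$. The composition $S\circ_i T$ grafts the root of $T$ onto the $i$-th leaf of $S$. For $c\in\mathrm{Tree}_2((m))$, $m\ge2$, the face $\partial_i c\in\mathrm{Tree}_2((m-1))$ is obtained by erasing the $i$-th leaf (and suppressing the resulting vertex with one input), e.g. $\partial_i((12)3)=\partial_i(1(23))=(12)$.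 The nonsymmetric operad $\mathrm{Tree}_2^-$ has $\mathrm{Tree}_2^-((0))=\{\circ\}$ a singleton, $\mathrm{Tree}_2^-((m))=\mathrm{Tree}_2((m))$ for $m\ge1$, with the grafting compositions and additionally $c\circ_i\circ=\partial_i c$ for $m\ge2$ and $1\circ_1\circ=\circ$. *)

theory Defs
  imports Complex_Main "HOL-Library.Poly_Mapping"
begin

text \<open>Planar binary rooted trees; leaves are numbered 1..m from left to right.\<close>
datatype btree = Leaf | Node btree btree

fun leaves :: "btree \<Rightarrow> nat" where
  "leaves Leaf = 1"
| "leaves (Node l r) = leaves l + leaves r"

fun graft :: "btree \<Rightarrow> nat \<Rightarrow> btree \<Rightarrow> btree" where
  "graft Leaf i u = u"
| "graft (Node l r) i u =
     (if i \<le> leaves l then Node (graft l i u) r else Node l (graft r (i - leaves l) u))"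

text \<open>Face: erase the i-th leaf and suppress the resulting unary vertex.\<close>
fun face :: "nat \<Rightarrow> btree \<Rightarrow> btree" where
  "face i Leaf = Leaf"
| "face i (Node l r) =
     (if i \<le> leaves l
      then (if l = Leaf then r else Node (face i l) r)
      else (if r = Leaf then l else Node l (face (i - leaves l) r)))"

text \<open>Elements of the operad Tree2^-: the arity-0 element Circ, or a tree.\<close>
datatype elem = Circ | T btree

fun arity :: "elem \<Rightarrow> nat" where
  "arity Circ = 0"
| "arity (T t) = leaves t"

text \<open>Partial composition c o_s d (only meaningful for 1 \<le> s \<le> arity c).\<close>
fun comp :: "elem \<Rightarrow> nat \<Rightarrow> elem \<Rightarrow> elem" where
  "comp (T t) s (T u) = T (graft t s u)"
| "comp (T t) s Circ = (if t = Leaf then Circ else T (face s t))"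
| "comp Circ s d = Circ"

text \<open>The Lie algebra \<Lambda>(Q Tree2^-): finitely supported Q-linear combinations of elements.\<close>
type_synonym lam = "elem \<Rightarrow>\<^sub>0 rat"

definition basis :: "elem \<Rightarrow> lam" where
  "basis c = Poly_Mapping.single c 1"

definition br_basis :: "elem \<Rightarrow> elem \<Rightarrow> lam" where
  "br_basis c d = (\<Sum>t = 1..arity d. basis (comp d t c)) - (\<Sum>s = 1..arity c. basis (comp c s d))"

definition bracket :: "lam \<Rightarrow> lam \<Rightarrow> lam" where
  "bracket a b = (\<Sum>c \<in> Poly_Mapping.keys a. \<Sum>d \<in> Poly_Mapping.keys b.
       Poly_Mapping.map (\<lambda>x. (Poly_Mapping.lookup a c * Poly_Mapping.lookup b d) * x) (br_basis c d))"

definition smult :: "rat \<Rightarrow> lam \<Rightarrow> lam" where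
  "smult q a = Poly_Mapping.map (\<lambda>x. q * x) a"

inductive_set lie_gen :: "lam set \<Rightarrow> lam set" for S :: "lam set" where
  gen: "a \<in> S \<Longrightarrow> a \<in> lie_gen S"
| zero: "0 \<in> lie_gen S"
| add: "a \<in> lie_gen S \<Longrightarrow> b \<in> lie_gen S \<Longrightarrow> a + b \<in> lie_gen S"
| scal: "a \<in> lie_gen S \<Longrightarrow> smult q a \<in> lie_gen S"
| brk: "a \<in> lie_gen S \<Longrightarrow> b \<in> lie_gen S \<Longrightarrow> bracket a b \<in> lie_gen S"

definition finitely_generated_lie :: bool where
  "finitely_generated_lie \<longleftrightarrow> (\<exists>S. finite S \<and> lie_gen S = UNIV)"

end

theory Submission
  imports Defs
begin


lemma leaves_pos: "leaves t \<ge> 1"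
  by (induction t) auto

lemma leaves_eq1: "leaves t = 1 \<longleftrightarrow> t = Leaf"
proof (cases t)
  case (Node l r) thus ?thesis using leaves_pos[of l] leaves_pos[of r] by auto
qed simp

lemma leaves_graft: "leaves (graft x i y) = leaves x + leaves y - 1"
proof (induction x arbitrary: i)
  case (Node l r) thus ?case using leaves_pos[of l] leaves_pos[of r] leaves_pos[of y] by auto
qed simp

lemma leaves_face: "x \<noteq> Leaf \<Longrightarrow> leaves (face i x) = leaves x - 1"
proof (induction x arbitrary: i)
  case (Node l r) thus ?case using leaves_pos[of l] leaves_pos[of r] by auto
qed simp

lemma graft_Leaf_right: "graft x i Leaf = x"
  by (induction x arbitrary: i) auto

lemma graft_seq:
  "1 \<le> s \<Longrightarrow> s \<le> leaves x \<Longrightarrow> 1 \<le> t \<Longrightarrow> t \<le> leaves y \<Longrightarrow>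
   graft (graft x s y) (s+t-1) z = graft x s (graft y t z)"
proof (induction x arbitrary: s)
  case Leaf then show ?case by simp
next
  case (Node l r)
  show ?case
  proof (cases "s \<le> leaves l")
    case True
    have a: "s + t - 1 \<le> leaves (graft l s y)" using True Node.prems by (simp add: leaves_graft)
    show ?thesis using True a Node.IH(1)[of s] Node.prems by simp
  next
    case False
    have e: "s + t - 1 - leaves l = (s - leaves l) + t - 1" using False Node.prems by simp
    have i: "graft (graft r (s - leaves l) y) ((s - leaves l) + t - 1) z = graft r (s - leaves l) (graft y t z)"
      using Node.IH(2)[of "s - leaves l"] False Node.prems by simp
    have b: "\<not> s + t - 1 \<le> leaves l" using False Node.prems by simp
    show ?thesis using False b i e by simp
  qed
qed

lemma graft_par:
  "1 \<le> u \<Longrightarrow> u < s \<Longrightarrow> s \<le> leaves x \<Longrightarrow>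
   graft (graft x s y) u z = graft (graft x u z) (s + leaves z - 1) y"
proof (induction x arbitrary: s u)
  case Leaf then show ?case by simp
next
  case (Node l r)
  consider "s \<le> leaves l" | "u \<le> leaves l" "\<not> s \<le> leaves l" | "\<not> u \<le> leaves l" by linarith
  then show ?case
  proof cases
    case 1
    have a: "u \<le> leaves (graft l s y)" using 1 Node.prems leaves_pos[of y] by (simp add: leaves_graft)
    have b: "s + leaves z - 1 \<le> leaves (graft l u z)" using 1 Node.prems leaves_pos[of z] by (simp add: leaves_graft)
    have c: "u \<le> leaves l" using 1 Node.prems by simp
    show ?thesis using Node.IH(1)[of u s] Node.prems 1 a b c by simp
  next
    case 2
    have a: "u \<le> leaves l" using 2 by simp
    have b: "\<not> s + leaves z - 1 \<le> leaves (graft l u z)" using 2 Node.prems leaves_pos[of z] by (simp add: leaves_graft)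
    have e: "s + leaves z - 1 - leaves (graft l u z) = s - leaves l" using 2 Node.prems leaves_pos[of z] by (simp add: leaves_graft)
    show ?thesis using 2 a b e by simp
  next
    case 3
    have a: "\<not> u \<le> leaves l" "\<not> s \<le> leaves l" using 3 Node.prems by auto
    have e: "s + leaves z - 1 - leaves l = (s - leaves l) + leaves z - 1" using 3 Node.prems by simp
    have i: "graft (graft r (s - leaves l) y) (u - leaves l) z = graft (graft r (u - leaves l) z) ((s - leaves l) + leaves z - 1) y"
      using Node.IH(2)[of "u - leaves l" "s - leaves l"] Node.prems 3 by simp
    have b: "\<not> s + leaves z - 1 \<le> leaves l" using a leaves_pos[of z] by simp
    show ?thesis using a b e i by simp
  qed
qed



lemma leaves2_nonLeaf: "2 \<le> leaves t \<Longrightarrow> t \<noteq> Leaf"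
  by auto

lemma graft_nonLeaf: "2 \<le> leaves x \<or> 2 \<le> leaves y \<Longrightarrow> graft x i y \<noteq> Leaf"
  using leaves_graft[of x i y] leaves_pos[of x] leaves_pos[of y]
  by (intro leaves2_nonLeaf) linarith

lemma face_seq:
  "y \<noteq> Leaf \<Longrightarrow> 1 \<le> s \<Longrightarrow> s \<le> leaves x \<Longrightarrow> 1 \<le> t \<Longrightarrow> t \<le> leaves y \<Longrightarrow>
   face (s+t-1) (graft x s y) = graft x s (face t y)"
proof (induction x arbitrary: s)
  case Leaf then show ?case by simp
next
  case (Node l r)
  have ny: "leaves y \<ge> 2" using Node.prems leaves_eq1[of y] leaves_pos[of y] by linarith
  show ?case
  proof (cases "s \<le> leaves l")
    case True
    have a: "s + t - 1 \<le> leaves (graft l s y)" using True Node.prems by (simp add: leaves_graft)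
    have b: "graft l s y \<noteq> Leaf" using ny by (intro graft_nonLeaf) simp
    show ?thesis using True a b Node.IH(1)[of s] Node.prems by simp
  next
    case False
    have e: "s + t - 1 - leaves l = (s - leaves l) + t - 1" using False Node.prems by simp
    have i: "face ((s - leaves l) + t - 1) (graft r (s - leaves l) y) = graft r (s - leaves l) (face t y)"
      using Node.IH(2)[of "s - leaves l"] False Node.prems by simp
    have b: "\<not> s + t - 1 \<le> leaves l" using False Node.prems by simp
    have c: "graft r (s - leaves l) y \<noteq> Leaf" using ny by (intro graft_nonLeaf) simp
    show ?thesis using False b i e c by simp
  qed
qed

lemma face_par1:
  "2 \<le> leaves x \<Longrightarrow> 1 \<le> u \<Longrightarrow> u < s \<Longrightarrow> s \<le> leaves x \<Longrightarrow>
   graft (face s x) u z = face (s + leaves z - 1) (graft x u z)"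
proof (induction x arbitrary: s u)
  case Leaf then show ?case by simp
next
  case (Node l r)
  consider "s \<le> leaves l" | "u \<le> leaves l" "\<not> s \<le> leaves l" | "\<not> u \<le> leaves l" by linarith
  then show ?case
  proof cases
    case 1
    have l2: "2 \<le> leaves l" using 1 Node.prems by simp
    have nl: "l \<noteq> Leaf" using l2 by auto
    have a: "u \<le> leaves (face s l)" using 1 Node.prems nl by (simp add: leaves_face)
    have b: "s + leaves z - 1 \<le> leaves (graft l u z)" using 1 Node.prems leaves_pos[of z] by (simp add: leaves_graft)
    have c: "graft l u z \<noteq> Leaf" using l2 by (intro graft_nonLeaf) simp
    have d: "u \<le> leaves l" using 1 Node.prems by simp
    have i: "graft (face s l) u z = face (s + leaves z - 1) (graft l u z)"
      by (rule Node.IH(1)) (use l2 1 Node.prems in auto)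
    show ?thesis using i Node.prems 1 a b c d l2 nl by simp
  next
    case 2
    have b: "\<not> s + leaves z - 1 \<le> leaves (graft l u z)" using 2 Node.prems leaves_pos[of z] by (simp add: leaves_graft)
    have e: "s + leaves z - 1 - leaves (graft l u z) = s - leaves l" using 2 Node.prems leaves_pos[of z] by (simp add: leaves_graft)
    show ?thesis
    proof (cases "r = Leaf")
      case True thus ?thesis using 2 b e by simp
    next
      case False
      have "u \<le> leaves l" using 2 by simp
      thus ?thesis using 2 b e False by simp
    qed
  next
    case 3
    have a: "\<not> u \<le> leaves l" "\<not> s \<le> leaves l" using 3 Node.prems by auto
    have nr: "r \<noteq> Leaf" using Node.prems a by auto
    have r2: "2 \<le> leaves r" using nr leaves_eq1[of r] leaves_pos[of r] by linarith
    have e: "s + leaves z - 1 - leaves l = (s - leaves l) + leaves z - 1" using 3 Node.prems by simp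
    have i: "graft (face (s - leaves l) r) (u - leaves l) z = face ((s - leaves l) + leaves z - 1) (graft r (u - leaves l) z)"
      by (rule Node.IH(2)) (use Node.prems 3 r2 in auto)
    have b: "\<not> s + leaves z - 1 \<le> leaves l" using a leaves_pos[of z] by simp
    have c: "graft r (u - leaves l) z \<noteq> Leaf" using r2 by (intro graft_nonLeaf) simp
    have d: "\<not> u - leaves l \<le> leaves (face (s - leaves l) r) \<Longrightarrow> False"
      using nr Node.prems a by (simp add: leaves_face)
    show ?thesis using a b e i c nr d by auto
  qed
qed

lemma face_par2:
  "1 \<le> u \<Longrightarrow> u < s \<Longrightarrow> s \<le> leaves x \<Longrightarrow>
   face u (graft x s y) = graft (face u x) (s - 1) y"
proof (induction x arbitrary: s u)
  case Leaf then show ?case by simp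
next
  case (Node l r)
  consider "s \<le> leaves l" | "u \<le> leaves l" "\<not> s \<le> leaves l" | "\<not> u \<le> leaves l" by linarith
  then show ?case
  proof cases
    case 1
    have l2: "2 \<le> leaves l" using 1 Node.prems by simp
    have nl: "l \<noteq> Leaf" using l2 by auto
    have a: "u \<le> leaves (graft l s y)" using 1 Node.prems leaves_pos[of y] by (simp add: leaves_graft)
    have b: "s - 1 \<le> leaves (face u l)" using 1 Node.prems nl by (simp add: leaves_face)
    have c: "graft l s y \<noteq> Leaf" using l2 by (intro graft_nonLeaf) simp
    have d: "u \<le> leaves l" using 1 Node.prems by simp
    show ?thesis using Node.IH(1)[of u s] Node.prems 1 a b c d nl by simp
  next
    case 2
    have nr: "r \<noteq> Leaf \<or> True" by simp
    have e: "s - 1 - leaves (face u l) = s - leaves l" if "l \<noteq> Leaf" using 2 Node.prems that by (simp add: leaves_face)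
    show ?thesis
    proof (cases "l = Leaf")
      case True
      thus ?thesis using 2 Node.prems by simp
    next
      case False
      have b: "\<not> s - 1 \<le> leaves (face u l)" using 2 False leaves_pos[of l] by (simp add: leaves_face)
      thus ?thesis using 2 False e by simp
    qed
  next
    case 3
    have a: "\<not> u \<le> leaves l" "\<not> s \<le> leaves l" using 3 Node.prems by auto
    have nr: "r \<noteq> Leaf" using Node.prems a by auto
    have i: "face (u - leaves l) (graft r (s - leaves l) y) = graft (face (u - leaves l) r) (s - leaves l - 1) y"
      using Node.IH(2)[of "u - leaves l" "s - leaves l"] Node.prems 3 by simp
    have r2: "2 \<le> leaves r" using nr leaves_eq1[of r] leaves_pos[of r] by linarith
    have c: "graft r (s - leaves l) y \<noteq> Leaf" using r2 by (intro graft_nonLeaf) simp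
    have e: "s - 1 - leaves l = s - leaves l - 1" by simp
    have b: "\<not> s - 1 \<le> leaves l" using a Node.prems by simp
    show ?thesis using a i c nr e b by simp
  qed
qed



lemma leaves2_cases: "leaves t = 2 \<Longrightarrow> t = Node Leaf Leaf"
proof (cases t)
  case (Node a b)
  assume "leaves t = 2"
  then have "leaves a = 1" "leaves b = 1" using Node leaves_pos[of a] leaves_pos[of b] by auto
  then show ?thesis using Node leaves_eq1 by auto
qed simp

lemma face_face:
  "3 \<le> leaves x \<Longrightarrow> 1 \<le> u \<Longrightarrow> u < s \<Longrightarrow> s \<le> leaves x \<Longrightarrow>
   face u (face s x) = face (s - 1) (face u x)"
proof (induction x arbitrary: s u)
  case Leaf then show ?case by simp
next
  case (Node l r)
  consider "s \<le> leaves l" | "u \<le> leaves l" "\<not> s \<le> leaves l" | "\<not> u \<le> leaves l" by linarith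
  then show ?case
  proof cases
    case 1
    have l2: "2 \<le> leaves l" using 1 Node.prems by simp
    have nl: "l \<noteq> Leaf" using l2 by auto
    show ?thesis
    proof (cases "leaves l = 2")
      case True
      then have "l = Node Leaf Leaf" by (rule leaves2_cases)
      then show ?thesis using 1 Node.prems by (auto simp: numeral_2_eq_2)
    next
      case False
      have l3: "3 \<le> leaves l" using False l2 by simp
      have nf: "face s l \<noteq> Leaf" "face u l \<noteq> Leaf" using l3 nl leaves_face[of l] by (intro leaves2_nonLeaf; simp)+
      have a: "u \<le> leaves (face s l)" using 1 Node.prems nl by (simp add: leaves_face)
      have b: "s - 1 \<le> leaves (face u l)" using 1 Node.prems nl by (simp add: leaves_face)
      have d: "u \<le> leaves l" using 1 Node.prems by simp
      have i: "face u (face s l) = face (s - 1) (face u l)"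
        by (rule Node.IH(1)) (use l3 1 Node.prems in auto)
      show ?thesis using i Node.prems 1 a b d nl nf by simp
    qed
  next
    case 2
    show ?thesis
    proof (cases "l = Leaf")
      case True
      then have u1: "u = 1" using 2 Node.prems by simp
      have nr: "r \<noteq> Leaf" using True Node.prems by auto
      have e: "s - 1 = s - leaves l" using True by simp
      show ?thesis using True u1 nr e 2 by simp
    next
      case False
      have b: "\<not> s - 1 \<le> leaves (face u l)" using 2 False leaves_pos[of l] by (simp add: leaves_face)
      have e: "s - 1 - leaves (face u l) = s - leaves l" using 2 False leaves_pos[of l] by (simp add: leaves_face)
      show ?thesis
      proof (cases "r = Leaf")
        case True
        then show ?thesis using 2 False b by simp
      next
        case nr: False
        have "face u l \<noteq> Leaf \<or> True" by simp
        show ?thesis using 2 False b e nr by simp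
      qed
    qed
  next
    case 3
    have a: "\<not> u \<le> leaves l" "\<not> s \<le> leaves l" using 3 Node.prems by auto
    have nr: "r \<noteq> Leaf" using Node.prems a by auto
    have r2: "2 \<le> leaves r" using nr leaves_eq1[of r] leaves_pos[of r] by linarith
    show ?thesis
    proof (cases "leaves r = 2")
      case True
      then have rr: "r = Node Leaf Leaf" by (rule leaves2_cases)
      then have "s = leaves l + 2" "u = leaves l + 1" using Node.prems a by auto
      then show ?thesis using rr by simp
    next
      case False
      have r3: "3 \<le> leaves r" using False r2 by simp
      have nf: "face (s - leaves l) r \<noteq> Leaf" "face (u - leaves l) r \<noteq> Leaf"
        using r3 nr leaves_face[of r] by (intro leaves2_nonLeaf; simp)+
      have i: "face (u - leaves l) (face (s - leaves l) r) = face (s - leaves l - 1) (face (u - leaves l) r)"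
        by (rule Node.IH(2)) (use r3 3 Node.prems in auto)
      have b: "\<not> s - 1 \<le> leaves l" using a Node.prems by simp
      have e: "s - 1 - leaves l = s - leaves l - 1" by simp
      show ?thesis using a i nf nr e b by simp
    qed
  qed
qed



lemma arity_comp: "1 \<le> s \<Longrightarrow> s \<le> arity x \<Longrightarrow> arity (comp x s y) = arity x + arity y - 1"
proof (cases x)
  case (T t)
  then show ?thesis
  proof (cases y)
    case Circ
    then show ?thesis using T by (auto simp: leaves_face)
  qed (auto simp: leaves_graft)
qed simp

lemma comp_seq:
  assumes "1 \<le> s" "s \<le> arity x" "1 \<le> t" "t \<le> arity y"
  shows "comp (comp x s y) (s+t-1) z = comp x s (comp y t z)"
proof -
  obtain a where xa: "x = T a" using assms by (cases x) auto
  obtain b where yb: "y = T b" using assms by (cases y) auto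
  show ?thesis
  proof (cases z)
    case (T c)
    then show ?thesis using xa yb assms graft_seq[of s a t b c] by simp
  next
    case Circ
    show ?thesis
    proof (cases "b = Leaf")
      case True
      then have "t = 1" using assms yb by simp
      then show ?thesis using True xa yb Circ by (simp add: graft_Leaf_right)
    next
      case False
      have "graft a s b \<noteq> Leaf" using False leaves_eq1[of b] leaves_pos[of b]
        by (intro graft_nonLeaf) simp
      then show ?thesis using False xa yb Circ assms face_seq[of b s a t] by simp
    qed
  qed
qed

lemma comp_par:
  assumes "1 \<le> u" "u < s" "s \<le> arity x"
  shows "comp (comp x s y) u z = comp (comp x u z) (s + arity z - 1) y"
proof -
  obtain a where xa: "x = T a" using assms by (cases x) auto
  have a2: "2 \<le> leaves a" using assms xa by simp
  have na: "a \<noteq> Leaf" using a2 by auto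
  show ?thesis
  proof (cases y)
    case (T b)
    show ?thesis
    proof (cases z)
      case (T c)
      then show ?thesis using xa \<open>y = T b\<close> assms graft_par[of u s a b c] by simp
    next
      case Circ
      have "graft a s b \<noteq> Leaf" using a2 by (intro graft_nonLeaf) simp
      then show ?thesis using xa \<open>y = T b\<close> Circ assms na face_par2[of u s a b] by simp
    qed
  next
    case Circ
    show ?thesis
    proof (cases z)
      case (T c)
      have e: "graft (face s a) u c = face (s + leaves c - 1) (graft a u c)"
        using face_par1[of a u s c] a2 assms xa by simp
      have "graft a u c \<noteq> Leaf" using a2 by (intro graft_nonLeaf) simp
      then show ?thesis using xa Circ T na e by simp
    next
      case zc: Circ
      show ?thesis
      proof (cases "leaves a = 2")
        case True
        then have "a = Node Leaf Leaf" by (rule leaves2_cases)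
        then show ?thesis using xa Circ zc assms by (auto simp: numeral_2_eq_2)
      next
        case False
        then have a3: "3 \<le> leaves a" using a2 by simp
        have nf: "face s a \<noteq> Leaf" "face u a \<noteq> Leaf" using a3 na leaves_face[of a] by (intro leaves2_nonLeaf; simp)+
        have "face u (face s a) = face (s - 1) (face u a)" using face_face[of a u s] a3 assms xa by simp
        then show ?thesis using xa Circ zc na nf by simp
      qed
    qed
  qed
qed



abbreviation lkp :: "lam \<Rightarrow> elem \<Rightarrow> rat" where "lkp \<equiv> Poly_Mapping.lookup"
abbreviation kys :: "lam \<Rightarrow> elem set" where "kys \<equiv> Poly_Mapping.keys"

lemma lookup_smult: "lkp (smult q a) k = q * lkp a k"
  unfolding smult_def by (simp add: Poly_Mapping.map.rep_eq when_def)

lemma lookup_basis: "lkp (basis c) k = (if c = k then 1 else 0)"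
  unfolding basis_def by (simp add: lookup_single when_def)

lemma smult_add_right: "smult q (a + b) = smult q a + smult q b"
  by (rule poly_mapping_eqI) (simp add: lookup_smult lookup_add algebra_simps)
lemma smult_add_left: "smult (p + q) a = smult p a + smult q a"
  by (rule poly_mapping_eqI) (simp add: lookup_smult lookup_add algebra_simps)
lemma smult_diff_right: "smult q (a - b) = smult q a - smult q b"
  by (rule poly_mapping_eqI) (simp add: lookup_smult lookup_minus algebra_simps)
lemma smult_diff_left: "smult (p - q) a = smult p a - smult q a"
  by (rule poly_mapping_eqI) (simp add: lookup_smult lookup_minus algebra_simps)
lemma smult_zero_right[simp]: "smult q 0 = 0"
  by (rule poly_mapping_eqI) (simp add: lookup_smult)
lemma smult_zero_left[simp]: "smult 0 a = 0"
  by (rule poly_mapping_eqI) (simp add: lookup_smult)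
lemma smult_one[simp]: "smult 1 a = a"
  by (rule poly_mapping_eqI) (simp add: lookup_smult)
lemma smult_smult: "smult p (smult q a) = smult (p * q) a"
  by (rule poly_mapping_eqI) (simp add: lookup_smult)
lemma smult_minus_one: "smult (-1) a = - a"
  by (rule poly_mapping_eqI) (simp add: lookup_smult)
lemma smult_sum_right: "smult q (sum f A) = (\<Sum>x\<in>A. smult q (f x))"
  by (rule poly_mapping_eqI) (simp add: lookup_smult lookup_sum sum_distrib_left)

lemma keys_smult: "kys (smult q a) \<subseteq> kys a"
  by (auto simp: in_keys_iff lookup_smult)

definition lin :: "(elem \<Rightarrow> lam) \<Rightarrow> lam \<Rightarrow> lam" where
  "lin f a = (\<Sum>c\<in>kys a. smult (lkp a c) (f c))"

lemma lin_superset: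
  assumes "finite K" "kys a \<subseteq> K"
  shows "lin f a = (\<Sum>c\<in>K. smult (lkp a c) (f c))"
  unfolding lin_def
  by (rule sum.mono_neutral_left) (use assms in \<open>auto simp: in_keys_iff\<close>)

lemma lookup_lin: "lkp (lin f a) k = (\<Sum>c\<in>kys a. lkp a c * lkp (f c) k)"
  unfolding lin_def by (simp add: lookup_sum lookup_smult)

lemma lin_add: "lin f (a + b) = lin f a + lin f b"
proof -
  let ?K = "kys a \<union> kys b"
  have k: "kys (a + b) \<subseteq> ?K" by (rule keys_add)
  have "lin f (a + b) = (\<Sum>c\<in>?K. smult (lkp (a+b) c) (f c))" by (rule lin_superset) (use k in auto)
  also have "\<dots> = (\<Sum>c\<in>?K. smult (lkp a c) (f c)) + (\<Sum>c\<in>?K. smult (lkp b c) (f c))"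
    by (simp add: lookup_add smult_add_left sum.distrib)
  also have "\<dots> = lin f a + lin f b"
    by (subst (1 2) lin_superset[of ?K]) auto
  finally show ?thesis .
qed

lemma lin_smult: "lin f (smult q a) = smult q (lin f a)"
proof -
  have "lin f (smult q a) = (\<Sum>c\<in>kys a. smult (lkp (smult q a) c) (f c))"
    by (rule lin_superset) (auto simp: keys_smult)
  also have "\<dots> = smult q (lin f a)"
    by (simp add: lin_def smult_sum_right lookup_smult smult_smult)
  finally show ?thesis .
qed

lemma lin_zero[simp]: "lin f 0 = 0"
  by (simp add: lin_def)

lemma lin_minus: "lin f (- a) = - lin f a"
  by (metis lin_smult smult_minus_one)

lemma lin_diff: "lin f (a - b) = lin f a - lin f b"
  by (metis diff_conv_add_uminus lin_add lin_minus)

lemma lin_sum: "lin f (sum g A) = (\<Sum>x\<in>A. lin f (g x))"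
  by (induction A rule: infinite_finite_induct) (auto simp: lin_add)

lemma lin_basis[simp]: "lin f (basis c) = f c"
  unfolding lin_def basis_def by simp

lemma lin_cong: "(\<And>c. c \<in> kys a \<Longrightarrow> f c = g c) \<Longrightarrow> lin f a = lin g a"
  unfolding lin_def by simp

lemma lin_fun_add: "lin (\<lambda>c. f c + g c) a = lin f a + lin g a"
  unfolding lin_def by (simp add: smult_add_right sum.distrib)

lemma lin_fun_diff: "lin (\<lambda>c. f c - g c) a = lin f a - lin g a"
  unfolding lin_def by (simp add: smult_diff_right sum_subtractf)

lemma lin_fun_smult: "lin (\<lambda>c. smult q (f c)) a = smult q (lin f a)"
  unfolding lin_def by (simp add: smult_sum_right smult_smult mult.commute)

lemma lin_fun_sum: "lin (\<lambda>c. sum (\<lambda>i. f i c) A) a = (\<Sum>i\<in>A. lin (f i) a)"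
  unfolding lin_def by (simp add: smult_sum_right sum.swap[of _ A])

lemma lin_fun_zero[simp]: "lin (\<lambda>c. 0) a = 0"
  unfolding lin_def by simp

lemma lin_basis_id: "lin basis a = a"
proof (rule poly_mapping_eqI)
  fix k
  show "lkp (lin basis a) k = lkp a k"
  proof -
    have "(\<Sum>c\<in>kys a. lkp a c * (if c = k then 1 else 0)) = (\<Sum>c\<in>kys a. if c = k then lkp a c else 0)"
      by (rule sum.cong) auto
    also have "\<dots> = lkp a k" by (simp add: sum.delta in_keys_iff)
    finally show ?thesis by (simp add: lookup_lin lookup_basis)
  qed
qed

lemma lin_compose: "lin g (lin f a) = lin (\<lambda>c. lin g (f c)) a"
  by (simp add: lin_def[of f] lin_def[of "\<lambda>c. lin g (f c)"] lin_sum lin_smult)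

lemma lin_swap: "lin (\<lambda>c. lin (\<lambda>d. F c d) b) a = lin (\<lambda>d. lin (\<lambda>c. F c d) a) b"
  unfolding lin_def by (simp add: smult_sum_right smult_smult sum.swap[of _ "kys a"] mult.commute)



definition P :: "elem \<Rightarrow> elem \<Rightarrow> lam" where
  "P c d = (\<Sum>s = 1..arity c. basis (comp c s d))"

lemma triangle:
  fixes h :: "nat \<Rightarrow> nat \<Rightarrow> lam"
  shows "(\<Sum>s\<in>{1..a}. \<Sum>u\<in>{1..<s}. h u (s - 1)) = (\<Sum>u\<in>{1..a}. \<Sum>v\<in>{u..<a}. h u v)"
proof (induction a)
  case 0 then show ?case by simp
next
  case (Suc a)
  have "(\<Sum>s\<in>{1..Suc a}. \<Sum>u\<in>{1..<s}. h u (s - 1)) = (\<Sum>s\<in>{1..a}. \<Sum>u\<in>{1..<s}. h u (s - 1)) + (\<Sum>u\<in>{1..<Suc a}. h u a)"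
    by simp
  also have "\<dots> = (\<Sum>u\<in>{1..a}. \<Sum>v\<in>{u..<a}. h u v) + (\<Sum>u\<in>{1..a}. h u a)"
    using Suc by (simp add: atLeastLessThanSuc_atLeastAtMost)
  also have "\<dots> = (\<Sum>u\<in>{1..a}. (\<Sum>v\<in>{u..<a}. h u v) + h u a)" by (simp add: sum.distrib)
  also have "\<dots> = (\<Sum>u\<in>{1..a}. \<Sum>v\<in>{u..<Suc a}. h u v)"
    by (rule sum.cong) auto
  also have "\<dots> = (\<Sum>u\<in>{1..Suc a}. \<Sum>v\<in>{u..<Suc a}. h u v)"
    by simp
  finally show ?case .
qed

lemma split3:
  fixes f :: "nat \<Rightarrow> lam"
  assumes "1 \<le> s" "s \<le> a"
  shows "(\<Sum>u\<in>{1..a+b-1}. f u) = (\<Sum>u\<in>{1..<s}. f u) + (\<Sum>t\<in>{1..b}. f (s + t - 1)) + (\<Sum>v\<in>{s..<a}. f (v + b))"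
proof -
  have e0: "{1..a+b-1} = {1..<a+b}" using assms by auto
  have "(\<Sum>u\<in>{1..<a+b}. f u) = (\<Sum>u\<in>{1..<s}. f u) + (\<Sum>u\<in>{s..<a+b}. f u)"
    using assms by (simp add: sum.atLeastLessThan_concat)
  also have "(\<Sum>u\<in>{s..<a+b}. f u) = (\<Sum>u\<in>{s..<s+b}. f u) + (\<Sum>u\<in>{s+b..<a+b}. f u)"
    using assms by (simp add: sum.atLeastLessThan_concat)
  also have "(\<Sum>u\<in>{s..<s+b}. f u) = (\<Sum>t\<in>{1..b}. f (s + t - 1))"
  proof -
    have "(\<Sum>u\<in>{s..<s+b}. f u) = (\<Sum>u\<in>{1 + (s - 1)..<(b + 1) + (s - 1)}. f u)"
      using assms by (simp add: add.commute)
    also have "\<dots> = (\<Sum>t\<in>{1..<b+1}. f (t + (s - 1)))" by (rule sum.shift_bounds_nat_ivl)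
    also have "\<dots> = (\<Sum>t\<in>{1..b}. f (s + t - 1))"
      using assms by (intro sum.cong) (auto simp: add.commute)
    finally show ?thesis .
  qed
  also have "(\<Sum>u\<in>{s+b..<a+b}. f u) = (\<Sum>v\<in>{s..<a}. f (v + b))"
    by (rule sum.shift_bounds_nat_ivl)
  finally show ?thesis using e0 by (simp add: add.assoc)
qed

lemma P_comp_split:
  assumes "1 \<le> s" "s \<le> arity x"
  shows "P (comp x s y) z =
    (\<Sum>u\<in>{1..<s}. basis (comp (comp x s y) u z))
    + (\<Sum>t\<in>{1..arity y}. basis (comp x s (comp y t z)))
    + (\<Sum>v\<in>{s..<arity x}. basis (comp (comp x s y) (v + arity y) z))"
proof -
  have "P (comp x s y) z = (\<Sum>u\<in>{1..arity x + arity y - 1}. basis (comp (comp x s y) u z))"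
    unfolding P_def using arity_comp[OF assms] by simp
  also have "\<dots> = (\<Sum>u\<in>{1..<s}. basis (comp (comp x s y) u z))
    + (\<Sum>t\<in>{1..arity y}. basis (comp (comp x s y) (s + t - 1) z))
    + (\<Sum>v\<in>{s..<arity x}. basis (comp (comp x s y) (v + arity y) z))"
    by (rule split3[OF assms])
  also have "(\<Sum>t\<in>{1..arity y}. basis (comp (comp x s y) (s + t - 1) z))
           = (\<Sum>t\<in>{1..arity y}. basis (comp x s (comp y t z)))"
    by (rule sum.cong) (use assms comp_seq in auto)
  finally show ?thesis .
qed

definition Aterm :: "elem \<Rightarrow> elem \<Rightarrow> elem \<Rightarrow> lam" where
  "Aterm x y z = (\<Sum>s\<in>{1..arity x}. \<Sum>u\<in>{1..<s}. basis (comp (comp x s y) u z))"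
definition Cterm :: "elem \<Rightarrow> elem \<Rightarrow> elem \<Rightarrow> lam" where
  "Cterm x y z = (\<Sum>s\<in>{1..arity x}. \<Sum>v\<in>{s..<arity x}. basis (comp (comp x s y) (v + arity y) z))"

lemma AC: "Aterm x y z = Cterm x z y"
proof -
  have "Aterm x y z = (\<Sum>s\<in>{1..arity x}. \<Sum>u\<in>{1..<s}. basis (comp (comp x u z) ((s - 1) + arity z) y))"
    unfolding Aterm_def
  proof (intro sum.cong refl)
    fix s u assume s: "s \<in> {1..arity x}" and u: "u \<in> {1..<s}"
    have "comp (comp x s y) u z = comp (comp x u z) (s + arity z - 1) y"
      using s u by (intro comp_par) auto
    also have "s + arity z - 1 = (s - 1) + arity z" using s by auto
    finally show "basis (comp (comp x s y) u z) = basis (comp (comp x u z) ((s - 1) + arity z) y)" by simp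
  qed
  also have "\<dots> = Cterm x z y"
    unfolding Cterm_def by (rule triangle[where h = "\<lambda>u v. basis (comp (comp x u z) (v + arity z) y)"])
  finally show ?thesis .
qed

definition PL :: "elem \<Rightarrow> elem \<Rightarrow> elem \<Rightarrow> lam" where
  "PL x y z = (\<Sum>s\<in>{1..arity x}. P (comp x s y) z) - (\<Sum>t\<in>{1..arity y}. P x (comp y t z))"

lemma PL_eq: "PL x y z = Aterm x y z + Cterm x y z"
proof -
  have "(\<Sum>s\<in>{1..arity x}. P (comp x s y) z) =
     (\<Sum>s\<in>{1..arity x}. (\<Sum>u\<in>{1..<s}. basis (comp (comp x s y) u z))
    + (\<Sum>t\<in>{1..arity y}. basis (comp x s (comp y t z)))
    + (\<Sum>v\<in>{s..<arity x}. basis (comp (comp x s y) (v + arity y) z)))"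
    by (rule sum.cong) (auto simp: P_comp_split)
  also have "\<dots> = Aterm x y z + (\<Sum>s\<in>{1..arity x}. \<Sum>t\<in>{1..arity y}. basis (comp x s (comp y t z))) + Cterm x y z"
    by (simp add: Aterm_def Cterm_def sum.distrib)
  also have "(\<Sum>s\<in>{1..arity x}. \<Sum>t\<in>{1..arity y}. basis (comp x s (comp y t z))) = (\<Sum>t\<in>{1..arity y}. P x (comp y t z))"
    unfolding P_def by (rule sum.swap)
  finally show ?thesis unfolding PL_def by simp
qed

lemma PL_sym: "PL x y z = PL x z y"
  using AC[of x y z] AC[of x z y] by (simp add: PL_eq add.commute)



definition Pl :: "lam \<Rightarrow> lam \<Rightarrow> lam" where
  "Pl a b = lin (\<lambda>c. lin (\<lambda>d. P c d) b) a"

lemma br_basis_P: "br_basis c d = P d c - P c d"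
  unfolding br_basis_def P_def by simp

lemma bracket_lin: "bracket a b = lin (\<lambda>c. lin (\<lambda>d. br_basis c d) b) a"
proof -
  have "bracket a b = (\<Sum>c\<in>kys a. \<Sum>d\<in>kys b. smult (lkp a c * lkp b d) (br_basis c d))"
    unfolding bracket_def smult_def by simp
  also have "\<dots> = lin (\<lambda>c. lin (\<lambda>d. br_basis c d) b) a"
    unfolding lin_def by (simp add: smult_sum_right smult_smult)
  finally show ?thesis .
qed

lemma bracket_Pl: "bracket a b = Pl b a - Pl a b"
proof -
  have "bracket a b = lin (\<lambda>c. lin (\<lambda>d. P d c) b - lin (\<lambda>d. P c d) b) a"
    unfolding bracket_lin br_basis_P lin_fun_diff by simp
  also have "\<dots> = lin (\<lambda>c. lin (\<lambda>d. P d c) b) a - Pl a b"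
    unfolding Pl_def by (rule lin_fun_diff)
  also have "lin (\<lambda>c. lin (\<lambda>d. P d c) b) a = Pl b a"
    unfolding Pl_def by (rule lin_swap)
  finally show ?thesis .
qed

lemma Pl_add_left: "Pl (a + a') b = Pl a b + Pl a' b"
  unfolding Pl_def by (rule lin_add)
lemma Pl_add_right: "Pl a (b + b') = Pl a b + Pl a b'"
  unfolding Pl_def by (simp add: lin_add lin_fun_add)
lemma Pl_diff_left: "Pl (a - a') b = Pl a b - Pl a' b"
  unfolding Pl_def by (rule lin_diff)
lemma Pl_diff_right: "Pl a (b - b') = Pl a b - Pl a b'"
  unfolding Pl_def by (simp add: lin_diff lin_fun_diff)

definition T3 :: "(elem \<Rightarrow> elem \<Rightarrow> elem \<Rightarrow> lam) \<Rightarrow> lam \<Rightarrow> lam \<Rightarrow> lam \<Rightarrow> lam" where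
  "T3 F a b c = lin (\<lambda>x. lin (\<lambda>y. lin (\<lambda>z. F x y z) c) b) a"

lemma lin_P: "lin G (P x y) = (\<Sum>s\<in>{1..arity x}. G (comp x s y))"
  unfolding P_def by (simp add: lin_sum)

lemma Pl_Pl_left: "Pl (Pl a b) c = T3 (\<lambda>x y z. \<Sum>s\<in>{1..arity x}. P (comp x s y) z) a b c"
proof -
  have "Pl (Pl a b) c = lin (\<lambda>x. lin (\<lambda>y. lin (\<lambda>w. lin (\<lambda>z. P w z) c) (P x y)) b) a"
    unfolding Pl_def[of "Pl a b"] unfolding Pl_def by (simp add: lin_compose)
  also have "\<dots> = T3 (\<lambda>x y z. \<Sum>s\<in>{1..arity x}. P (comp x s y) z) a b c"
    unfolding T3_def lin_P by (simp add: lin_fun_sum)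
  finally show ?thesis .
qed

lemma Pl_Pl_right: "Pl a (Pl b c) = T3 (\<lambda>x y z. \<Sum>t\<in>{1..arity y}. P x (comp y t z)) a b c"
proof -
  have "Pl a (Pl b c) = lin (\<lambda>x. lin (\<lambda>y. lin (\<lambda>z. lin (\<lambda>w. P x w) (P y z)) c) b) a"
    unfolding Pl_def by (simp add: lin_compose)
  also have "\<dots> = T3 (\<lambda>x y z. \<Sum>t\<in>{1..arity y}. P x (comp y t z)) a b c"
    unfolding T3_def lin_P by simp
  finally show ?thesis .
qed

lemma T3_diff: "T3 F a b c - T3 G a b c = T3 (\<lambda>x y z. F x y z - G x y z) a b c"
  unfolding T3_def by (simp add: lin_fun_diff)

lemma T3_swap: "T3 F a b c = T3 (\<lambda>x y z. F x z y) a c b"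
  unfolding T3_def by (subst lin_swap) simp

lemma preLie: "Pl (Pl a b) c - Pl a (Pl b c) = Pl (Pl a c) b - Pl a (Pl c b)"
proof -
  have "Pl (Pl a b) c - Pl a (Pl b c) = T3 PL a b c"
    unfolding Pl_Pl_left Pl_Pl_right T3_diff PL_def by simp
  also have "\<dots> = T3 (\<lambda>x y z. PL x z y) a c b" by (rule T3_swap)
  also have "\<dots> = T3 PL a c b" by (simp add: PL_sym[symmetric])
  also have "\<dots> = Pl (Pl a c) b - Pl a (Pl c b)"
    unfolding Pl_Pl_left Pl_Pl_right T3_diff PL_def by simp
  finally show ?thesis .
qed

lemma jacobi: "bracket a (bracket b c) = bracket (bracket a b) c + bracket b (bracket a c)"
proof -
  have A1: "Pl (Pl a b) c - Pl a (Pl b c) = Pl (Pl a c) b - Pl a (Pl c b)" by (rule preLie)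
  have A2: "Pl (Pl b a) c - Pl b (Pl a c) = Pl (Pl b c) a - Pl b (Pl c a)" by (rule preLie)
  have A3: "Pl (Pl c a) b - Pl c (Pl a b) = Pl (Pl c b) a - Pl c (Pl b a)" by (rule preLie)
  define X1 where "X1 = Pl (Pl a b) c - Pl a (Pl b c) - (Pl (Pl a c) b - Pl a (Pl c b))"
  define X2 where "X2 = Pl (Pl b a) c - Pl b (Pl a c) - (Pl (Pl b c) a - Pl b (Pl c a))"
  define X3 where "X3 = Pl (Pl c a) b - Pl c (Pl a b) - (Pl (Pl c b) a - Pl c (Pl b a))"
  have z: "X1 = 0" "X2 = 0" "X3 = 0" unfolding X1_def X2_def X3_def using A1 A2 A3 by simp_all
  have "bracket a (bracket b c) - (bracket (bracket a b) c + bracket b (bracket a c)) = X2 - X1 - X3"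
    unfolding bracket_Pl Pl_diff_left Pl_diff_right X1_def X2_def X3_def
    by (simp add: algebra_simps)
  then show ?thesis using z by simp
qed



definition hom :: "nat \<Rightarrow> lam \<Rightarrow> bool" where
  "hom n a \<longleftrightarrow> (\<forall>k\<in>kys a. arity k = n)"

lemma hom_basis: "hom (arity c) (basis c)"
  unfolding hom_def basis_def by simp

lemma hom_zero[simp]: "hom n 0"
  unfolding hom_def by simp

lemma hom_add: "hom n a \<Longrightarrow> hom n b \<Longrightarrow> hom n (a + b)"
  unfolding hom_def using keys_add[of a b] by blast

lemma hom_smult: "hom n a \<Longrightarrow> hom n (smult q a)"
  unfolding hom_def using keys_smult by blast

lemma hom_diff: "hom n a \<Longrightarrow> hom n b \<Longrightarrow> hom n (a - b)"
  by (metis diff_conv_add_uminus hom_add hom_smult smult_minus_one)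

lemma hom_sum: "(\<And>i. i \<in> A \<Longrightarrow> hom n (f i)) \<Longrightarrow> hom n (sum f A)"
  by (induction A rule: infinite_finite_induct) (auto intro: hom_add)

lemma hom_lin: "(\<And>c. c \<in> kys a \<Longrightarrow> hom n (f c)) \<Longrightarrow> hom n (lin f a)"
  unfolding lin_def by (intro hom_sum hom_smult) auto

lemma hom_lookup: "hom n a \<Longrightarrow> arity k \<noteq> n \<Longrightarrow> lkp a k = 0"
  unfolding hom_def by (auto simp: in_keys_iff)

lemma hom_P: "hom (arity c + arity d - 1) (P c d)"
  unfolding P_def
proof (intro hom_sum)
  fix s assume "s \<in> {1..arity c}"
  then show "hom (arity c + arity d - 1) (basis (comp c s d))"
    using hom_basis[of "comp c s d"] arity_comp[of s c d] by simp
qed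

lemma hom_br_basis: "hom (arity c + arity d - 1) (br_basis c d)"
  unfolding br_basis_P using hom_P[of d c] hom_P[of c d] by (intro hom_diff) (simp_all add: add.commute)

lemma hom_bracket: "hom a x \<Longrightarrow> hom b y \<Longrightarrow> hom (a + b - 1) (bracket x y)"
  unfolding bracket_lin
  by (intro hom_lin) (metis hom_br_basis hom_def)

lemma bracket_basis_left: "bracket (basis c) b = lin (\<lambda>d. br_basis c d) b"
  unfolding bracket_lin by simp

lemma bracket_add_left: "bracket (a + a') b = bracket a b + bracket a' b"
  unfolding bracket_lin by (rule lin_add)
lemma bracket_add_right: "bracket a (b + b') = bracket a b + bracket a b'"
  unfolding bracket_lin by (simp add: lin_add lin_fun_add)
lemma bracket_smult_left: "bracket (smult q a) b = smult q (bracket a b)"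
  unfolding bracket_lin by (rule lin_smult)
lemma bracket_smult_right: "bracket a (smult q b) = smult q (bracket a b)"
  unfolding bracket_lin by (simp add: lin_smult lin_fun_smult)
lemma bracket_zero_left[simp]: "bracket 0 b = 0"
  unfolding bracket_lin by simp
lemma bracket_zero_right[simp]: "bracket a 0 = 0"
  unfolding bracket_lin by simp
lemma bracket_sum_left: "bracket (sum f A) b = (\<Sum>i\<in>A. bracket (f i) b)"
  by (induction A rule: infinite_finite_induct) (auto simp: bracket_add_left)

lemma sum_const_lam: "(\<Sum>x\<in>A. (y::lam)) = smult (of_nat (card A)) y"
  by (rule poly_mapping_eqI) (simp add: lookup_sum lookup_smult)

lemma br_basis_Leaf: "br_basis (T Leaf) d = smult (of_nat (arity d) - 1) (basis d)"
proof -
  have a: "P d (T Leaf) = smult (of_nat (arity d)) (basis d)"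
  proof (cases d)
    case Circ then show ?thesis by (simp add: P_def)
  next
    case (T u)
    have "P d (T Leaf) = (\<Sum>s\<in>{1..arity d}. basis d)"
      unfolding P_def using T by (simp add: graft_Leaf_right)
    then show ?thesis by (simp add: sum_const_lam)
  qed
  have b: "P (T Leaf) d = basis d"
    by (cases d) (simp_all add: P_def)
  show ?thesis unfolding br_basis_P a b by (simp add: smult_diff_left)
qed

lemma bracket_Leaf: "hom n v \<Longrightarrow> bracket (basis (T Leaf)) v = smult (of_nat n - 1) v"
proof -
  assume h: "hom n v"
  have "bracket (basis (T Leaf)) v = lin (\<lambda>d. smult (of_nat (arity d) - 1) (basis d)) v"
    unfolding bracket_basis_left br_basis_Leaf ..
  also have "\<dots> = lin (\<lambda>d. smult (of_nat n - 1) (basis d)) v"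
    by (rule lin_cong) (use h in \<open>auto simp: hom_def\<close>)
  also have "\<dots> = smult (of_nat n - 1) v" by (simp add: lin_fun_smult lin_basis_id)
  finally show ?thesis .
qed

lemma bracket_Circ_basis: "bracket (basis Circ) (basis c) = (\<Sum>t\<in>{1..arity c}. basis (comp c t Circ))"
  unfolding bracket_basis_left by (simp add: br_basis_P P_def)



inductive Wd :: "nat \<Rightarrow> nat \<Rightarrow> lam \<Rightarrow> bool" for N :: nat where
  base: "arity c \<le> Suc N \<Longrightarrow> Wd N (arity c) (basis c)"
| step: "Wd N a w \<Longrightarrow> 2 \<le> leaves t \<Longrightarrow> leaves t \<le> Suc N \<Longrightarrow> Wd N (leaves t + a - 1) (bracket (basis (T t)) w)"

inductive_set Sp :: "nat \<Rightarrow> lam set" for N :: nat where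
  zero: "0 \<in> Sp N"
| wd: "Wd N n w \<Longrightarrow> w \<in> Sp N"
| add: "x \<in> Sp N \<Longrightarrow> y \<in> Sp N \<Longrightarrow> x + y \<in> Sp N"
| sm: "x \<in> Sp N \<Longrightarrow> smult q x \<in> Sp N"

lemma Sp_diff: "x \<in> Sp N \<Longrightarrow> y \<in> Sp N \<Longrightarrow> x - y \<in> Sp N"
  by (metis Sp.add Sp.sm diff_conv_add_uminus smult_minus_one)

lemma Sp_sum: "(\<And>i. i \<in> A \<Longrightarrow> f i \<in> Sp N) \<Longrightarrow> sum f A \<in> Sp N"
  by (induction A rule: infinite_finite_induct) (auto intro: Sp.intros)

lemma Wd_hom: "Wd N n w \<Longrightarrow> hom n w"
proof (induction rule: Wd.induct)
  case (base c) then show ?case by (simp add: hom_basis)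
next
  case (step a w t)
  then show ?case using hom_bracket[OF hom_basis[of "T t"] step.IH] by simp
qed

lemma Sp_tree:
  assumes "2 \<le> leaves t" "leaves t \<le> Suc N" "x \<in> Sp N"
  shows "bracket (basis (T t)) x \<in> Sp N"
  using assms(3)
proof (induction x rule: Sp.induct)
  case zero then show ?case by (simp add: Sp.zero)
next
  case (wd n w) then show ?case using assms by (blast intro: Sp.wd Wd.step)
next
  case (add x y) then show ?case by (simp add: bracket_add_right Sp.add)
next
  case (sm x q) then show ?case by (simp add: bracket_smult_right Sp.sm)
qed

lemma Sp_Leaf: "x \<in> Sp N \<Longrightarrow> bracket (basis (T Leaf)) x \<in> Sp N"
proof (induction x rule: Sp.induct)
  case zero then show ?case by (simp add: Sp.zero)
next
  case (wd n w) then show ?case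
    using bracket_Leaf[OF Wd_hom[OF wd]] by (auto intro: Sp.sm Sp.wd)
next
  case (add x y) then show ?case by (simp add: bracket_add_right Sp.add)
next
  case (sm x q) then show ?case by (simp add: bracket_smult_right Sp.sm)
qed

lemma Wd_Circ: "Wd N n w \<Longrightarrow> bracket (basis Circ) w \<in> Sp N"
proof (induction rule: Wd.induct)
  case (base c)
  show ?case unfolding bracket_Circ_basis
  proof (intro Sp_sum)
    fix t assume t: "t \<in> {1..arity c}"
    have "arity (comp c t Circ) \<le> Suc N" using arity_comp[of t c Circ] t base by simp
    then show "basis (comp c t Circ) \<in> Sp N" by (blast intro: Sp.wd Wd.base)
  qed
next
  case (step a w t)
  have nt: "t \<noteq> Leaf" using step by auto
  have wS: "w \<in> Sp N" using step by (blast intro: Sp.wd)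
  have j: "bracket (basis Circ) (bracket (basis (T t)) w) =
    bracket (bracket (basis Circ) (basis (T t))) w + bracket (basis (T t)) (bracket (basis Circ) w)"
    by (rule jacobi)
  have 1: "bracket (basis (T t)) (bracket (basis Circ) w) \<in> Sp N"
    using step by (intro Sp_tree) auto
  have "bracket (bracket (basis Circ) (basis (T t))) w = (\<Sum>i\<in>{1..leaves t}. bracket (basis (T (face i t))) w)"
    unfolding bracket_Circ_basis bracket_sum_left using nt by simp
  also have "\<dots> \<in> Sp N"
  proof (intro Sp_sum)
    fix i assume i: "i \<in> {1..leaves t}"
    show "bracket (basis (T (face i t))) w \<in> Sp N"
    proof (cases "face i t = Leaf")
      case True then show ?thesis using Sp_Leaf[OF wS] by simp
    next
      case False
      have l: "leaves (face i t) = leaves t - 1" using nt by (simp add: leaves_face)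
      have "2 \<le> leaves (face i t)" using False leaves_eq1[of "face i t"] leaves_pos[of "face i t"] by linarith
      moreover have "leaves (face i t) \<le> Suc N" using l step by simp
      ultimately show ?thesis by (intro Sp_tree wS)
    qed
  qed
  finally show ?case using j 1 by (simp add: Sp.add)
qed

lemma Sp_Circ: "x \<in> Sp N \<Longrightarrow> bracket (basis Circ) x \<in> Sp N"
proof (induction x rule: Sp.induct)
  case zero then show ?case by (simp add: Sp.zero)
next
  case (wd n w) then show ?case by (rule Wd_Circ)
next
  case (add x y) then show ?case by (simp add: bracket_add_right Sp.add)
next
  case (sm x q) then show ?case by (simp add: bracket_smult_right Sp.sm)
qed

lemma Sp_gen: "arity c \<le> Suc N \<Longrightarrow> x \<in> Sp N \<Longrightarrow> bracket (basis c) x \<in> Sp N"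
proof (cases c)
  case Circ
  then show "x \<in> Sp N \<Longrightarrow> bracket (basis c) x \<in> Sp N" using Sp_Circ by simp
next
  case (T t)
  assume a: "arity c \<le> Suc N" and x: "x \<in> Sp N"
  show ?thesis
  proof (cases "t = Leaf")
    case True then show ?thesis using T Sp_Leaf[OF x] by simp
  next
    case False
    have "2 \<le> leaves t" using False leaves_eq1[of t] leaves_pos[of t] by linarith
    then show ?thesis using T a x Sp_tree[of t N x] by simp
  qed
qed

lemma Wd_bracket: "Wd N n u \<Longrightarrow> x \<in> Sp N \<Longrightarrow> bracket u x \<in> Sp N"
proof (induction arbitrary: x rule: Wd.induct)
  case (base c) then show ?case by (rule Sp_gen)
next
  case (step a w t)
  let ?g = "basis (T t)"
  have j: "bracket ?g (bracket w x) = bracket (bracket ?g w) x + bracket w (bracket ?g x)"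
    by (rule jacobi)
  have 1: "bracket ?g (bracket w x) \<in> Sp N" using step by (intro Sp_tree) auto
  have 2: "bracket w (bracket ?g x) \<in> Sp N" using step by (intro step.IH Sp_tree) auto
  have "bracket (bracket ?g w) x = bracket ?g (bracket w x) - bracket w (bracket ?g x)"
    using j by (simp add: algebra_simps)
  then show ?case using 1 2 by (simp add: Sp_diff)
qed

lemma Sp_bracket: "y \<in> Sp N \<Longrightarrow> x \<in> Sp N \<Longrightarrow> bracket y x \<in> Sp N"
proof (induction y rule: Sp.induct)
  case zero then show ?case by (simp add: Sp.zero)
next
  case (wd n w) then show ?case by (rule Wd_bracket)
next
  case (add y z) then show ?case by (simp add: bracket_add_left Sp.add)
next
  case (sm y q) then show ?case by (simp add: bracket_smult_left Sp.sm)
qed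

lemma lie_gen_Sp: "S \<subseteq> Sp N \<Longrightarrow> lie_gen S \<subseteq> Sp N"
proof
  fix x assume S: "S \<subseteq> Sp N" and x: "x \<in> lie_gen S"
  from x show "x \<in> Sp N"
    by (induction rule: lie_gen.induct) (use S in \<open>auto intro: Sp.intros Sp_bracket\<close>)
qed



fun lcn :: "nat \<Rightarrow> btree" where
  "lcn 0 = Leaf"
| "lcn (Suc k) = Node (lcn k) Leaf"

lemma leaves_lcn: "leaves (lcn k) = Suc k"
  by (induction k) auto

lemma graft_lc_pos: "2 \<le> i \<Longrightarrow> i \<le> leaves a \<Longrightarrow> 2 \<le> leaves b \<Longrightarrow> graft a i b \<noteq> lcn M"
proof (induction a arbitrary: i M)
  case Leaf then show ?case by simp
next
  case (Node l r)
  show ?case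
  proof (cases "i \<le> leaves l")
    case True
    have g: "graft (Node l r) i b = Node (graft l i b) r" using True by simp
    show ?thesis
    proof (cases M)
      case 0 then show ?thesis using g by simp
    next
      case (Suc M')
      have "graft l i b \<noteq> lcn M'" using Node.IH(1)[of i M'] Node.prems True by simp
      then show ?thesis using g Suc by simp
    qed
  next
    case False
    have "graft r (i - leaves l) b \<noteq> Leaf" using Node.prems by (intro graft_nonLeaf) simp
    have g: "graft (Node l r) i b = Node l (graft r (i - leaves l) b)" using False by simp
    show ?thesis
    proof (cases M)
      case 0 then show ?thesis using g by simp
    next
      case (Suc M')
      then show ?thesis using g \<open>graft r (i - leaves l) b \<noteq> Leaf\<close> by simp
    qed
  qed
qed

lemma graft_lcn: "graft (lcn p) 1 (lcn q) = lcn (p + q)"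
  by (induction p) (auto simp: leaves_lcn)

lemma graft1_lc: "graft a 1 b = lcn M \<longleftrightarrow> (\<exists>p q. a = lcn p \<and> b = lcn q \<and> M = p + q)"
proof
  show "graft a 1 b = lcn M \<Longrightarrow> \<exists>p q. a = lcn p \<and> b = lcn q \<and> M = p + q"
  proof (induction a arbitrary: M)
    case Leaf then show ?case by (intro exI[of _ 0] exI[of _ M]) auto
  next
    case (Node l r)
    have g: "graft (Node l r) 1 b = Node (graft l 1 b) r" using leaves_pos[of l] by simp
    then obtain M' where M: "M = Suc M'" using Node.prems by (cases M) auto
    then have "graft l 1 b = lcn M'" "r = Leaf" using Node.prems g by auto
    then obtain p q where "l = lcn p" "b = lcn q" "M' = p + q" using Node.IH by blast
    then show ?case using M \<open>r = Leaf\<close> by (intro exI[of _ "Suc p"] exI[of _ q]) auto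
  qed
next
  show "\<exists>p q. a = lcn p \<and> b = lcn q \<and> M = p + q \<Longrightarrow> graft a 1 b = lcn M"
    using graft_lcn by auto
qed

lemma graft1_lc_sym: "graft a 1 b = lcn M \<longleftrightarrow> graft b 1 a = lcn M"
proof -
  have "(\<exists>p q. a = lcn p \<and> b = lcn q \<and> M = p + q) \<longleftrightarrow> (\<exists>p q. b = lcn p \<and> a = lcn q \<and> M = p + q)"
    by (metis add.commute)
  then show ?thesis unfolding graft1_lc .
qed

lemma lookup_P_lc:
  assumes "2 \<le> leaves b"
  shows "lkp (P (T a) (T b)) (T (lcn M)) = (if graft a 1 b = lcn M then 1 else 0)"
proof -
  have "lkp (P (T a) (T b)) (T (lcn M)) = (\<Sum>s\<in>{1..leaves a}. if graft a s b = lcn M then 1 else 0)"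
    unfolding P_def by (simp add: lookup_sum lookup_basis)
  also have "{1..leaves a} = insert 1 {2..leaves a}" using leaves_pos[of a] by auto
  also have "(\<Sum>s\<in>insert 1 {2..leaves a}. if graft a s b = lcn M then 1 else (0::rat))
      = (if graft a 1 b = lcn M then 1 else 0)"
    using graft_lc_pos[OF _ _ assms] by (simp add: sum.neutral)
  finally show ?thesis .
qed

lemma lookup_br_lc:
  assumes "2 \<le> leaves t" "2 \<le> leaves d"
  shows "lkp (br_basis (T t) (T d)) (T (lcn M)) = 0"
  unfolding br_basis_P lookup_minus
  using lookup_P_lc[OF assms(1), of d] lookup_P_lc[OF assms(2), of t] graft1_lc_sym[of d t M]
  by simp

lemma Wd_lc: "Wd N n w \<Longrightarrow> lkp w (T (lcn (Suc N))) = 0"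
proof (induction rule: Wd.induct)
  case (base c)
  then have "c \<noteq> T (lcn (Suc N))" using leaves_lcn[of "Suc N"] by auto
  then show ?case by (simp add: lookup_basis)
next
  case (step a w t)
  let ?k = "T (lcn (Suc N))"
  show ?case
  proof (cases "leaves t + a - 1 = Suc (Suc N)")
    case False
    have "hom (leaves t + a - 1) (bracket (basis (T t)) w)"
      using step Wd_hom by (blast intro: Wd.step)
    then show ?thesis using False leaves_lcn[of "Suc N"] by (intro hom_lookup) auto
  next
    case True
    then have a2: "2 \<le> a" using step by linarith
    have hw: "hom a w" using step Wd_hom by blast
    have "lkp (bracket (basis (T t)) w) ?k = (\<Sum>d\<in>kys w. lkp w d * lkp (br_basis (T t) d) ?k)"
      unfolding bracket_basis_left lookup_lin ..
    also have "\<dots> = 0"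
    proof (intro sum.neutral ballI)
      fix d assume d: "d \<in> kys w"
      then have ad: "arity d = a" using hw unfolding hom_def by auto
      obtain u where u: "d = T u" using ad a2 by (cases d) auto
      have u2: "2 \<le> leaves u" using ad a2 u by simp
      have "lkp (br_basis (T t) (T u)) ?k = 0" by (rule lookup_br_lc[OF \<open>2 \<le> leaves t\<close> u2])
      then show "lkp w d * lkp (br_basis (T t) d) ?k = 0" using u by simp
    qed
    finally show ?thesis .
  qed
qed

lemma Sp_lc: "x \<in> Sp N \<Longrightarrow> lkp x (T (lcn (Suc N))) = 0"
proof (induction rule: Sp.induct)
  case (wd n w) then show ?case by (rule Wd_lc)
qed (simp_all add: lookup_add lookup_smult)

lemma finite_Sp:
  assumes "finite S"
  shows "\<exists>N. S \<subseteq> Sp N"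
proof -
  define N where "N = Max (insert 0 (arity ` (\<Union>s\<in>S. kys s)))"
  have fin: "finite (insert 0 (arity ` (\<Union>s\<in>S. kys s)))" using assms by simp
  have "s \<in> Sp N" if s: "s \<in> S" for s
  proof -
    have "s = lin basis s" by (simp add: lin_basis_id)
    also have "\<dots> \<in> Sp N" unfolding lin_def
    proof (intro Sp_sum Sp.sm)
      fix c assume c: "c \<in> kys s"
      have "arity c \<le> N" unfolding N_def using fin c s by (intro Max_ge) auto
      then show "basis c \<in> Sp N" by (intro Sp.wd[of N "arity c"] Wd.base) simp
    qed
    finally show ?thesis .
  qed
  then show ?thesis by blast
qed

theorem theorem5p1:
  shows "\<not> finitely_generated_lie"
proof
  assume "finitely_generated_lie"
  then obtain S where S: "finite S" "lie_gen S = UNIV" unfolding finitely_generated_lie_def by blast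
  obtain N where "S \<subseteq> Sp N" using finite_Sp[OF S(1)] by blast
  then have "lie_gen S \<subseteq> Sp N" by (rule lie_gen_Sp)
  then have "basis (T (lcn (Suc N))) \<in> Sp N" using S(2) by auto
  then have "lkp (basis (T (lcn (Suc N)))) (T (lcn (Suc N))) = 0" by (rule Sp_lc)
  then show False by (simp add: lookup_basis)
qed


end
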